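(* Let $G$ be a finite connected graph with a real structure and let $D$ be a real divisor on $G$. Then $\operatorname{rk}_{\mathbb R}(D)\ge \operatorname{rk}(D)$.
   Context: A finite graph $G$ has vertex set $V(G)$, edge set $E(G)$ and incidence function $\psi$ assigning to each edge a set of one or two vertices (loops and multiple edges allowed). A real structure on $G$ is a pair of involutions of $V(G)$ and $E(G)$, written $v\mapsto\overline v$, $e\mapsto\overline e$, with $\psi(\overline e)=\overline{\psi(e)}$. A divisor is an element $D=\sum_{v}D(v)v$ of the free abelian group $\operatorname{Div}(G)$ on $V(G)$; $D\ge0$ means all $D(v)\ge0$; $\deg D=\sum_v D(v)$. For $f:V(G)\to\mathbb Z$, the principal divisor $\Delta(f)$ is given by $\Delta(f)(v)=\sum_{e\in E(G),\,\psi(e)=\{v,w\}}(f(w)-f(v))$. $D_1\sim D_2$ iff $D_2-D_1=\Delta(f)$ for some $f$. $|D|=\{D'\ge0: D'\sim D\}$. The rank $\operatorname{rk}(D)$ is $-1$ if $|D|=\emptyset$, and otherwise the maximal integer $r$ such that for every effective $E$ of degree $r$ there is $D'\in|D|$ with $D'-E\ge0$. The conjugate divisor is $\overline D(v)=D(\overline v)$; $D$ is real if $\overline D=D$. The real rank $\operatorname{rk}_{\mathbb R}(D)$ of a real divisor $D$ is the maximal integer $r$ such that for every real effective divisor $E$ of degree $r$ there is a real divisor $D'\in|D|$ with $D'-E\ge0$ (with value $-1$ if no such $r\ge0$ exists). *)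

theory Defs
  imports Main
begin

definition graph :: "'v set \<Rightarrow> 'e set \<Rightarrow> ('e \<Rightarrow> 'v set) \<Rightarrow> bool" where
  "graph V E psi \<longleftrightarrow> finite V \<and> finite E \<and>
     (\<forall>e\<in>E. psi e \<subseteq> V \<and> (card (psi e) = 1 \<or> card (psi e) = 2))"

definition adjacent :: "'e set \<Rightarrow> ('e \<Rightarrow> 'v set) \<Rightarrow> 'v \<Rightarrow> 'v \<Rightarrow> bool" where
  "adjacent E psi u w \<longleftrightarrow> (\<exists>e\<in>E. psi e = {u, w})"

definition connected_graph :: "'v set \<Rightarrow> 'e set \<Rightarrow> ('e \<Rightarrow> 'v set) \<Rightarrow> bool" where
  "connected_graph V E psi \<longleftrightarrow> graph V E psi \<and> V \<noteq> {} \<and>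
     (\<forall>u\<in>V. \<forall>w\<in>V. (adjacent E psi)\<^sup>*\<^sup>* u w)"

definition real_structure ::
  "'v set \<Rightarrow> 'e set \<Rightarrow> ('e \<Rightarrow> 'v set) \<Rightarrow> ('v \<Rightarrow> 'v) \<Rightarrow> ('e \<Rightarrow> 'e) \<Rightarrow> bool" where
  "real_structure V E psi cv ce \<longleftrightarrow>
     (\<forall>v\<in>V. cv v \<in> V \<and> cv (cv v) = v) \<and>
     (\<forall>e\<in>E. ce e \<in> E \<and> ce (ce e) = e \<and> psi (ce e) = cv ` psi e)"

definition divisor :: "'v set \<Rightarrow> ('v \<Rightarrow> int) \<Rightarrow> bool" where
  "divisor V D \<longleftrightarrow> (\<forall>v. v \<notin> V \<longrightarrow> D v = 0)"

definition effective :: "'v set \<Rightarrow> ('v \<Rightarrow> int) \<Rightarrow> bool" where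
  "effective V D \<longleftrightarrow> divisor V D \<and> (\<forall>v. D v \<ge> 0)"

definition deg :: "'v set \<Rightarrow> ('v \<Rightarrow> int) \<Rightarrow> int" where
  "deg V D = (\<Sum>v\<in>V. D v)"

definition principal :: "'e set \<Rightarrow> ('e \<Rightarrow> 'v set) \<Rightarrow> ('v \<Rightarrow> int) \<Rightarrow> 'v \<Rightarrow> int" where
  "principal E psi f v =
     (\<Sum>e\<in>{e\<in>E. v \<in> psi e}.
        (if psi e = {v} then 0 else (\<Sum>w\<in>psi e - {v}. f w - f v)))"

definition lin_equiv :: "'e set \<Rightarrow> ('e \<Rightarrow> 'v set) \<Rightarrow> ('v \<Rightarrow> int) \<Rightarrow> ('v \<Rightarrow> int) \<Rightarrow> bool" where
  "lin_equiv E psi D1 D2 \<longleftrightarrow> (\<exists>f. (\<lambda>v. D2 v - D1 v) = principal E psi f)"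

definition linear_system ::
  "'v set \<Rightarrow> 'e set \<Rightarrow> ('e \<Rightarrow> 'v set) \<Rightarrow> ('v \<Rightarrow> int) \<Rightarrow> ('v \<Rightarrow> int) set" where
  "linear_system V E psi D = {D'. effective V D' \<and> lin_equiv E psi D D'}"

definition rank_prop :: "'v set \<Rightarrow> 'e set \<Rightarrow> ('e \<Rightarrow> 'v set) \<Rightarrow> ('v \<Rightarrow> int) \<Rightarrow> nat \<Rightarrow> bool" where
  "rank_prop V E psi D r \<longleftrightarrow>
     (\<forall>F. effective V F \<and> deg V F = int r \<longrightarrow>
        (\<exists>D'\<in>linear_system V E psi D. \<forall>v. D' v - F v \<ge> 0))"

definition rk :: "'v set \<Rightarrow> 'e set \<Rightarrow> ('e \<Rightarrow> 'v set) \<Rightarrow> ('v \<Rightarrow> int) \<Rightarrow> int" where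
  "rk V E psi D =
     (if linear_system V E psi D = {} then -1
      else int (GREATEST r. rank_prop V E psi D r))"

definition real_divisor :: "'v set \<Rightarrow> ('v \<Rightarrow> 'v) \<Rightarrow> ('v \<Rightarrow> int) \<Rightarrow> bool" where
  "real_divisor V cv D \<longleftrightarrow> divisor V D \<and> (\<forall>v\<in>V. D (cv v) = D v)"

definition real_rank_prop ::
  "'v set \<Rightarrow> 'e set \<Rightarrow> ('e \<Rightarrow> 'v set) \<Rightarrow> ('v \<Rightarrow> 'v) \<Rightarrow> ('v \<Rightarrow> int) \<Rightarrow> nat \<Rightarrow> bool" where
  "real_rank_prop V E psi cv D r \<longleftrightarrow>
     (\<forall>F. effective V F \<and> real_divisor V cv F \<and> deg V F = int r \<longrightarrow>
        (\<exists>D'\<in>linear_system V E psi D. real_divisor V cv D' \<and> (\<forall>v. D' v - F v \<ge> 0)))"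

definition real_rk ::
  "'v set \<Rightarrow> 'e set \<Rightarrow> ('e \<Rightarrow> 'v set) \<Rightarrow> ('v \<Rightarrow> 'v) \<Rightarrow> ('v \<Rightarrow> int) \<Rightarrow> int" where
  "real_rk V E psi cv D =
     (if \<not> real_rank_prop V E psi cv D 0 then -1
      else int (GREATEST r. \<forall>s\<le>r. real_rank_prop V E psi cv D s))"

end

theory Submission
  imports Defs
begin

definition tm :: "('v \<Rightarrow> int) \<Rightarrow> 'v \<Rightarrow> 'v set \<Rightarrow> int" where
  "tm f v S = (if S = {v} then 0 else (\<Sum>w\<in>S - {v}. f w - f v))"

lemma principal_tm: "principal E psi f v = (\<Sum>e\<in>{e\<in>E. v \<in> psi e}. tm f v (psi e))"
  unfolding principal_def tm_def by simp

lemma principal_out: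
  assumes "graph V E psi" "v \<notin> V"
  shows "principal E psi f v = 0"
proof -
  have "{e\<in>E. v \<in> psi e} = {}" using assms unfolding graph_def by blast
  then show ?thesis unfolding principal_tm by (metis (no_types, lifting) sum.empty)
qed

lemma tm_mono:
  assumes "\<And>x. f x \<le> h x" "h v = f v"
  shows "tm f v S \<le> tm h v S"
  unfolding tm_def using assms by (auto intro: sum_mono)

lemma principal_mono:
  assumes "\<And>x. f x \<le> h x" "h v = f v"
  shows "principal E psi f v \<le> principal E psi h v"
  unfolding principal_tm by (rule sum_mono) (rule tm_mono, use assms in auto)

lemma tm_conj:
  assumes "inj_on cv V" "S \<subseteq> V" "v \<in> V"
  shows "tm f (cv v) (cv ` S) = tm (\<lambda>x. f (cv x)) v S"
proof -
  have inj: "inj_on cv (insert v S)" using assms by (meson inj_on_subset insert_subset)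
  have e1: "(cv ` S = {cv v}) = (S = {v})"
  proof
    assume "cv ` S = {cv v}"
    then have "cv ` S = cv ` {v}" by simp
    then show "S = {v}" using inj_on_image_eq_iff[OF inj] by blast
  qed simp
  have e2: "cv ` S - {cv v} = cv ` (S - {v})" using inj by (auto simp: inj_on_def)
  have inj2: "inj_on cv (S - {v})" using inj by (rule inj_on_subset) auto
  show ?thesis unfolding tm_def e1 e2 using sum.reindex[OF inj2, of "\<lambda>w. f w - f (cv v)"] by simp
qed

lemma principal_conj:
  assumes g: "graph V E psi" and rs: "real_structure V E psi cv ce" and v: "v \<in> V"
  shows "principal E psi f (cv v) = principal E psi (\<lambda>x. f (cv x)) v"
proof -
  have injv: "inj_on cv V" using rs unfolding real_structure_def inj_on_def by metis
  have cvV: "\<And>x. x \<in> V \<Longrightarrow> cv x \<in> V" using rs unfolding real_structure_def by blast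
  have injE: "inj_on ce {e\<in>E. v \<in> psi e}" using rs unfolding real_structure_def inj_on_def by (metis (no_types, lifting) mem_Collect_eq)
  have psub: "\<And>e. e \<in> E \<Longrightarrow> psi e \<subseteq> V" using g unfolding graph_def by blast
  have img: "ce ` {e\<in>E. v \<in> psi e} = {e\<in>E. cv v \<in> psi e}"
  proof
    show "ce ` {e\<in>E. v \<in> psi e} \<subseteq> {e\<in>E. cv v \<in> psi e}"
      using rs unfolding real_structure_def by auto
  next
    show "{e\<in>E. cv v \<in> psi e} \<subseteq> ce ` {e\<in>E. v \<in> psi e}"
    proof
      fix e assume e: "e \<in> {e\<in>E. cv v \<in> psi e}"
      then have ceE: "ce e \<in> E" "ce (ce e) = e" "psi (ce e) = cv ` psi e"
        using rs unfolding real_structure_def by auto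
      have "cv (cv v) = v" using rs v unfolding real_structure_def by blast
      then have "v \<in> psi (ce e)" using e ceE by force
      then show "e \<in> ce ` {e\<in>E. v \<in> psi e}" using ceE by (metis (mono_tags, lifting) image_eqI mem_Collect_eq)
    qed
  qed
  have "principal E psi f (cv v) = (\<Sum>e\<in>ce ` {e\<in>E. v \<in> psi e}. tm f (cv v) (psi e))"
    unfolding principal_tm img ..
  also have "\<dots> = (\<Sum>e\<in>{e\<in>E. v \<in> psi e}. tm f (cv v) (psi (ce e)))"
    using sum.reindex[OF injE] by simp
  also have "\<dots> = (\<Sum>e\<in>{e\<in>E. v \<in> psi e}. tm (\<lambda>x. f (cv x)) v (psi e))"
  proof (rule sum.cong)
    fix e assume e: "e \<in> {e\<in>E. v \<in> psi e}"
    then have "psi (ce e) = cv ` psi e" using rs unfolding real_structure_def by auto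
    then show "tm f (cv v) (psi (ce e)) = tm (\<lambda>x. f (cv x)) v (psi e)"
      using tm_conj[OF injv psub v] e by auto
  qed simp
  finally show ?thesis unfolding principal_tm .
qed

lemma deg_principal:
  assumes g: "graph V E psi"
  shows "(\<Sum>v\<in>V. principal E psi f v) = 0"
proof -
  have fV: "finite V" "finite E" using g unfolding graph_def by auto
  have "(\<Sum>v\<in>V. principal E psi f v) = (\<Sum>v\<in>V. \<Sum>e\<in>{e. e \<in> E \<and> v \<in> psi e}. tm f v (psi e))"
    unfolding principal_tm by simp
  also have "\<dots> = (\<Sum>e\<in>E. \<Sum>v\<in>{v. v \<in> V \<and> v \<in> psi e}. tm f v (psi e))"
    by (rule sum.swap_restrict[OF fV(1) fV(2)])
  also have "\<dots> = (\<Sum>e\<in>E. 0)"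
  proof (rule sum.cong)
    fix e assume e: "e \<in> E"
    have sub: "psi e \<subseteq> V" and c: "card (psi e) = 1 \<or> card (psi e) = 2"
      using g e unfolding graph_def by auto
    have s: "{v. v \<in> V \<and> v \<in> psi e} = psi e" using sub by blast
    show "(\<Sum>v\<in>{v. v \<in> V \<and> v \<in> psi e}. tm f v (psi e)) = 0"
      unfolding s using c
    proof (elim disjE)
      assume "card (psi e) = 1"
      then obtain a where "psi e = {a}" by (auto simp: card_Suc_eq)
      then show "(\<Sum>v\<in>psi e. tm f v (psi e)) = 0" by (simp add: tm_def)
    next
      assume "card (psi e) = 2"
      then obtain a b where ab: "psi e = {a, b}" "a \<noteq> b" by (auto simp: card_Suc_eq numeral_2_eq_2)
      have "{a, b} - {a} = {b}" "{a, b} - {b} = {a}" using ab by auto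
      then show "(\<Sum>v\<in>psi e. tm f v (psi e)) = 0" using ab by (simp add: tm_def doubleton_eq_iff)
    qed
  qed simp
  finally show ?thesis by simp
qed

lemma real_step:
  assumes g: "graph V E psi" and rs: "real_structure V E psi cv ce"
    and rd: "real_divisor V cv D" and rp: "rank_prop V E psi D r"
  shows "real_rank_prop V E psi cv D r"
  unfolding real_rank_prop_def
proof (intro allI impI)
  fix F assume F: "effective V F \<and> real_divisor V cv F \<and> deg V F = int r"
  then obtain D' where D': "D' \<in> linear_system V E psi D" "\<forall>v. D' v - F v \<ge> 0"
    using rp unfolding rank_prop_def by blast
  then obtain f where f: "(\<lambda>v. D' v - D v) = principal E psi f"
    unfolding linear_system_def lin_equiv_def by blast
  have D'v: "\<And>v. D' v = D v + principal E psi f v" using fun_cong[OF f] by (simp add: algebra_simps)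
  have cvV: "\<And>x. x \<in> V \<Longrightarrow> cv x \<in> V \<and> cv (cv x) = x" using rs unfolding real_structure_def by blast
  have Dr: "\<And>x. x \<in> V \<Longrightarrow> D (cv x) = D x" using rd unfolding real_divisor_def by blast
  have Fr: "\<And>x. x \<in> V \<Longrightarrow> F (cv x) = F x" using F unfolding real_divisor_def by blast
  define h where "h = (\<lambda>x. max (f x) (f (cv x)))"
  define D'' where "D'' = (\<lambda>v. D v + principal E psi h v)"
  have key: "\<And>v. v \<in> V \<Longrightarrow> D'' v \<ge> F v"
  proof -
    fix v assume v: "v \<in> V"
    show "D'' v \<ge> F v"
    proof (cases "h v = f v")
      case True
      have "principal E psi f v \<le> principal E psi h v"
        by (rule principal_mono) (use True in \<open>auto simp: h_def\<close>)
      then show ?thesis using D'(2) D'v[of v] unfolding D''_def by (smt (verit))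
    next
      case False
      then have hv: "h v = f (cv v)" unfolding h_def by auto
      have "principal E psi (\<lambda>x. f (cv x)) v \<le> principal E psi h v"
        by (rule principal_mono) (use hv in \<open>auto simp: h_def\<close>)
      moreover have "principal E psi f (cv v) = principal E psi (\<lambda>x. f (cv x)) v"
        by (rule principal_conj[OF g rs v])
      moreover have "D' (cv v) - F (cv v) \<ge> 0" using D'(2) by blast
      ultimately show ?thesis using D'v[of "cv v"] Dr[OF v] Fr[OF v] unfolding D''_def by (smt (verit))
    qed
  qed
  have out: "\<And>v. v \<notin> V \<Longrightarrow> D'' v = 0"
    using rd principal_out[OF g] unfolding D''_def real_divisor_def divisor_def by simp
  have Feff: "\<And>v. F v \<ge> 0" using F unfolding effective_def by blast
  have eff: "effective V D''" unfolding effective_def divisor_def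
  proof (intro conjI allI impI)
    fix v show "0 \<le> D'' v" using out[of v] key[of v] Feff[of v] by (cases "v \<in> V") auto
  qed (rule out)
  have lin: "lin_equiv E psi D D''" unfolding lin_equiv_def D''_def by auto
  have hr: "\<And>x. x \<in> V \<Longrightarrow> (\<lambda>y. h (cv y)) x = h x"
    using cvV unfolding h_def by auto
  have real: "real_divisor V cv D''" unfolding real_divisor_def
  proof (intro conjI ballI)
    show "divisor V D''" using eff unfolding effective_def by blast
  next
    fix v assume v: "v \<in> V"
    have "principal E psi h (cv v) = principal E psi (\<lambda>x. h (cv x)) v"
      by (rule principal_conj[OF g rs v])
    also have "\<dots> = principal E psi h v"
    proof -
      have pV: "\<And>e x. e \<in> E \<Longrightarrow> x \<in> psi e \<Longrightarrow> x \<in> V" using g unfolding graph_def by blast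
      have "\<And>e. e \<in> {e\<in>E. v \<in> psi e} \<Longrightarrow> tm (\<lambda>x. h (cv x)) v (psi e) = tm h v (psi e)"
      proof -
        fix e assume e: "e \<in> {e\<in>E. v \<in> psi e}"
        have "\<And>w. w \<in> psi e - {v} \<Longrightarrow> h (cv w) - h (cv v) = h w - h v"
        proof -
          fix w assume w: "w \<in> psi e - {v}"
          then have "w \<in> V" using pV e by blast
          then show "h (cv w) - h (cv v) = h w - h v" using hr v by simp
        qed
        then show "tm (\<lambda>x. h (cv x)) v (psi e) = tm h v (psi e)"
          unfolding tm_def by (metis (no_types, lifting) sum.cong)
      qed
      then show ?thesis unfolding principal_tm by (rule sum.cong[OF refl])
    qed
    finally show "D'' (cv v) = D'' v" unfolding D''_def using Dr[OF v] by simp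
  qed
  show "\<exists>D'\<in>linear_system V E psi D. real_divisor V cv D' \<and> (\<forall>v. D' v - F v \<ge> 0)"
  proof (intro bexI conjI)
    show "D'' \<in> linear_system V E psi D" unfolding linear_system_def using eff lin by blast
    show "real_divisor V cv D''" by (rule real)
    show "\<forall>v. D'' v - F v \<ge> 0"
    proof
      fix v show "D'' v - F v \<ge> 0"
        using key[of v] out[of v] F unfolding effective_def divisor_def by (cases "v \<in> V") auto
    qed
  qed
qed

lemma rank_down:
  assumes "V \<noteq> {}" "finite V" "rank_prop V E psi D r" "s \<le> r"
  shows "rank_prop V E psi D s"
  unfolding rank_prop_def
proof (intro allI impI)
  fix F assume F: "effective V F \<and> deg V F = int s"
  obtain v0 where v0: "v0 \<in> V" using assms by blast
  define F' where "F' = (\<lambda>v. if v = v0 then F v + int (r - s) else F v)"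
  have "effective V F'" using F v0 unfolding F'_def effective_def divisor_def
    by (metis add_nonneg_nonneg of_nat_0_le_iff)
  moreover have "deg V F' = int r"
  proof -
    have "deg V F' = F' v0 + (\<Sum>v\<in>V - {v0}. F' v)"
      unfolding deg_def using v0 assms(2) by (simp add: sum.remove)
    also have "(\<Sum>v\<in>V - {v0}. F' v) = (\<Sum>v\<in>V - {v0}. F v)"
      unfolding F'_def by (rule sum.cong) auto
    also have "F' v0 + (\<Sum>v\<in>V - {v0}. F v) = deg V F + int (r - s)"
      unfolding deg_def F'_def using v0 assms(2) by (simp add: sum.remove)
    finally have "deg V F' = deg V F + int (r - s)" .
    then show ?thesis using F assms(4) by simp
  qed
  ultimately obtain D' where D': "D' \<in> linear_system V E psi D" "\<forall>v. D' v - F' v \<ge> 0"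
    using assms(3) unfolding rank_prop_def by blast
  have "\<forall>v. D' v - F v \<ge> 0"
  proof
    fix v
    have "F v \<le> F' v" unfolding F'_def by simp
    then show "D' v - F v \<ge> 0" using D'(2) by (metis diff_ge_0_iff_ge order_trans)
  qed
  then show "\<exists>D'\<in>linear_system V E psi D. \<forall>v. D' v - F v \<ge> 0" using D'(1) by blast
qed

lemma deg_lin:
  assumes g: "graph V E psi" and D': "D' \<in> linear_system V E psi D"
  shows "deg V D' = deg V D"
proof -
  obtain f where f: "(\<lambda>v. D' v - D v) = principal E psi f"
    using D' unfolding linear_system_def lin_equiv_def by blast
  have "\<And>v. D' v = D v + principal E psi f v" using fun_cong[OF f] by (simp add: algebra_simps)
  then have "deg V D' = deg V D + (\<Sum>v\<in>V. principal E psi f v)" unfolding deg_def by (simp add: sum.distrib)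
  then show ?thesis using deg_principal[OF g] by simp
qed

lemma bound:
  assumes g: "graph V E psi" and rs: "real_structure V E psi cv ce" and ne: "V \<noteq> {}"
    and Q: "\<forall>s\<le>r. real_rank_prop V E psi cv D s"
  shows "r \<le> 2 * nat (deg V D) + 1"
proof -
  obtain v0 where v0: "v0 \<in> V" using ne by blast
  have fV: "finite V" using g unfolding graph_def by blast
  have cvV: "\<And>x. x \<in> V \<Longrightarrow> cv x \<in> V \<and> cv (cv x) = x" using rs unfolding real_structure_def by blast
  define k where "k = r div 2"
  define A where "A = {v0, cv v0}"
  have AV: "A \<subseteq> V" using v0 cvV unfolding A_def by auto
  define F where "F = (\<lambda>v. if v \<in> A then int k else 0)"
  have cA: "card A \<le> 2" unfolding A_def by (cases "v0 = cv v0") auto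
  have degF: "deg V F = int (k * card A)"
  proof -
    have "deg V F = (\<Sum>v\<in>V \<inter> A. int k)" unfolding deg_def F_def
      using sum.inter_restrict[OF fV, of "\<lambda>_. int k" A] by simp
    also have "V \<inter> A = A" using AV by blast
    finally show ?thesis by simp
  qed
  define s where "s = k * card A"
  have s1: "k * card A \<le> k * 2" by (rule mult_le_mono2[OF cA])
  have s2: "k * 2 \<le> r" unfolding k_def by simp
  have sr: "s \<le> r" unfolding s_def using s1 s2 by linarith
  have effF: "effective V F" using AV unfolding F_def effective_def divisor_def by auto
  have realF: "real_divisor V cv F" unfolding real_divisor_def
  proof (intro conjI ballI)
    show "divisor V F" using effF unfolding effective_def by blast
    fix v assume v: "v \<in> V"
    have "(cv v \<in> A) = (v \<in> A)" unfolding A_def using cvV[OF v] cvV[OF v0]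
      by (metis insert_iff singleton_iff)
    then show "F (cv v) = F v" unfolding F_def by simp
  qed
  have Rs: "real_rank_prop V E psi cv D s" using Q sr by blast
  have degF': "deg V F = int s" using degF unfolding s_def .
  obtain D' where D': "D' \<in> linear_system V E psi D" "\<forall>v. D' v - F v \<ge> 0"
    using Rs effF realF degF' unfolding real_rank_prop_def by blast
  have D'nn: "\<And>v. D' v \<ge> 0" using D'(1) unfolding linear_system_def effective_def by blast
  have Fv0: "F v0 = int k" unfolding F_def A_def by simp
  have "D' v0 - F v0 \<ge> 0" using D'(2) by blast
  then have "D' v0 \<ge> int k" using Fv0 by linarith
  also have "D' v0 \<le> deg V D'" unfolding deg_def
    using member_le_sum[OF v0, of D'] D'nn fV by simp
  also have "deg V D' = deg V D" by (rule deg_lin[OF g D'(1)])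
  finally have "int k \<le> deg V D" .
  then show ?thesis unfolding k_def by linarith
qed

theorem proposition1:
  fixes V :: "'v set" and E :: "'e set" and psi :: "'e \<Rightarrow> 'v set"
    and cv :: "'v \<Rightarrow> 'v" and ce :: "'e \<Rightarrow> 'e" and D :: "'v \<Rightarrow> int"
  assumes "connected_graph V E psi"
    and "real_structure V E psi cv ce"
    and "real_divisor V cv D"
  shows "real_rk V E psi cv D \<ge> rk V E psi D"
proof -
  have g: "graph V E psi" and ne: "V \<noteq> {}" using assms(1) unfolding connected_graph_def by auto
  have fV: "finite V" using g unfolding graph_def by blast
  show ?thesis
  proof (cases "linear_system V E psi D = {}")
    case True
    then show ?thesis unfolding rk_def real_rk_def by simp
  next
    case False
    then obtain D0 where D0: "D0 \<in> linear_system V E psi D" by blast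
    let ?P = "rank_prop V E psi D"
    let ?Q = "\<lambda>r. \<forall>s\<le>r. real_rank_prop V E psi cv D s"
    have P0: "?P 0" unfolding rank_prop_def
    proof (intro allI impI)
      fix F assume F: "effective V F \<and> deg V F = int 0"
      have "\<forall>v\<in>V. F v = 0"
        using F sum_nonneg_eq_0_iff[OF fV, of F] unfolding effective_def deg_def by auto
      then have "\<forall>v. F v = 0" using F unfolding effective_def divisor_def by blast
      then show "\<exists>D'\<in>linear_system V E psi D. \<forall>v. D' v - F v \<ge> 0"
        using D0 unfolding linear_system_def effective_def by auto
    qed
    have PQ: "\<And>r. ?P r \<Longrightarrow> ?Q r"
      using real_step[OF g assms(2) assms(3)] rank_down[OF ne fV] by blast
    have B: "\<And>r. ?Q r \<Longrightarrow> r \<le> 2 * nat (deg V D) + 1"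
      using bound[OF g assms(2) ne] by blast
    have PG: "?P (Greatest ?P)" by (rule GreatestI_nat[where P="?P", OF P0]) (use PQ B in blast)
    have "Greatest ?P \<le> Greatest ?Q" by (rule Greatest_le_nat[where P="?Q", OF PQ[OF PG]]) (use B in blast)
    moreover have "real_rank_prop V E psi cv D 0" using PQ[OF P0] by blast
    ultimately show ?thesis unfolding rk_def real_rk_def using False by simp
  qed
qed

end
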